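(* Let $\mathcal{R}$ be a von Neumann algebra acting on a Hilbert space $\mathcal{H}$ that is the ultraweak closure of an ascending union $\bigcup_n \mathfrak{A}_n$ of finite-dimensional C$^*$-algebras $\mathfrak{A}_1\subseteq\mathfrak{A}_2\subseteq\cdots$ (containing $I$), and for each $n$ let $\mathcal{U}_n$ be a finite group of unitary elements of $\mathfrak{A}_n$ that spans $\mathfrak{A}_n$ linearly. Let $p$ be a free ultrafilter on $\mathbb{N}$ and define $\Phi_{t,p}:\mathcal{B}(\mathcal{H})\to\mathcal{B}(\mathcal{H})$ by $$\Phi_{t,p}(T)=\text{weak-operator }\lim_{n\to p}\ \frac{1}{|\mathcal{U}_n|}\sum_{U\in\mathcal{U}_n}UTU^*.$$ Then $\Phi_{t,p}$ is a conditional expectation (a norm-one linear idempotent map) of $\mathcal{B}(\mathcal{H})$ onto the commutant $\mathcal{R}'$, and for every von Neumann algebra $\mathcal{S}$ with $\mathcal{R}\subseteq\mathcal{S}\subseteq\mathcal{B}(\mathcal{H})$, the restriction of $\Phi_{t,p}$ to $\mathcal{S}$ is a proper conditional expectation of $\mathcal{S}$ onto $\mathcal{S}\cap\mathcal{R}'$.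
   Context: A conditional expectation $\Psi$ of a von Neumann algebra $\mathcal{S}$ onto a von Neumann subalgebra is called proper when $\Psi(T)\in\mathrm{co}_{\mathcal{S}}(T)^-$ for every $T\in\mathcal{S}$, where $\mathrm{co}_{\mathcal{S}}(T)$ is the convex hull of $\{UTU^*: U\text{ a unitary in }\mathcal{S}\}$ and $^-$ denotes weak-operator closure. (The weak-operator limit along $p$ exists since the averages are uniformly bounded by $\|T\|$ and bounded sets are weak-operator compact.) *)

theory Defs
  imports Complex_Main
begin

text \<open>Complex inner product space; the inner product is conjugate-linear in the
first and linear in the second argument.\<close>
class complex_inner_space = ab_group_add +
  fixes scaleC :: "complex \<Rightarrow> 'a \<Rightarrow> 'a" (infixr "*\<^sub>C" 75)
    and cinner :: "'a \<Rightarrow> 'a \<Rightarrow> complex"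
  assumes scaleC_add_right: "a *\<^sub>C (x + y) = a *\<^sub>C x + a *\<^sub>C y"
    and scaleC_add_left: "(a + b) *\<^sub>C x = a *\<^sub>C x + b *\<^sub>C x"
    and scaleC_scaleC: "a *\<^sub>C (b *\<^sub>C x) = (a * b) *\<^sub>C x"
    and scaleC_one: "1 *\<^sub>C x = x"
    and cinner_conj: "cinner x y = cnj (cinner y x)"
    and cinner_add_right: "cinner x (y + z) = cinner x y + cinner x z"
    and cinner_scaleC_right: "cinner x (a *\<^sub>C y) = a * cinner x y"
    and cinner_nonneg: "0 \<le> Re (cinner x x)"
    and cinner_eq_zero: "cinner x x = 0 \<longleftrightarrow> x = 0"

class complex_hilbert_space = complex_inner_space +
  assumes hilbert_complete:
    "(\<forall>e>0. \<exists>N::nat. \<forall>m\<ge>N. \<forall>n\<ge>N. sqrt (Re (cinner (X m - X n) (X m - X n))) < e)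
      \<Longrightarrow> (\<exists>L. \<forall>e>0. \<exists>N::nat. \<forall>n\<ge>N. sqrt (Re (cinner (X n - L) (X n - L))) < e)"

definition hnorm :: "'h::complex_inner_space \<Rightarrow> real" where
  "hnorm x = sqrt (Re (cinner x x))"

type_synonym 'h op = "'h \<Rightarrow> 'h"

definition bounded_op :: "'h::complex_inner_space op \<Rightarrow> bool" where
  "bounded_op T \<longleftrightarrow> (\<forall>x y. T (x + y) = T x + T y) \<and> (\<forall>a x. T (a *\<^sub>C x) = a *\<^sub>C T x)
     \<and> (\<exists>K. \<forall>x. hnorm (T x) \<le> K * hnorm x)"

definition BH :: "'h::complex_inner_space op set" where
  "BH = {T. bounded_op T}"

definition opnorm :: "'h::complex_inner_space op \<Rightarrow> real" where
  "opnorm T = Sup {hnorm (T x) | x. hnorm x \<le> 1}"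

definition adj :: "'h::complex_inner_space op \<Rightarrow> 'h op" where
  "adj T = (THE S. \<forall>x y. cinner (T x) y = cinner x (S y))"

definition op_plus :: "'h::complex_inner_space op \<Rightarrow> 'h op \<Rightarrow> 'h op" where
  "op_plus S T = (\<lambda>x. S x + T x)"

definition op_scale :: "complex \<Rightarrow> 'h::complex_inner_space op \<Rightarrow> 'h op" where
  "op_scale a T = (\<lambda>x. a *\<^sub>C T x)"

definition op_zero :: "'h::complex_inner_space op" where
  "op_zero = (\<lambda>x. 0)"

definition op_span :: "'h::complex_inner_space op set \<Rightarrow> 'h op set" where
  "op_span B = {(\<lambda>x. \<Sum>b\<in>B. c b *\<^sub>C b x) | c. True}"

definition star_subalgebra :: "'h::complex_inner_space op set \<Rightarrow> bool" where
  "star_subalgebra A \<longleftrightarrow> A \<subseteq> BH \<and> id \<in> A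
     \<and> (\<forall>S\<in>A. \<forall>T\<in>A. op_plus S T \<in> A \<and> S \<circ> T \<in> A)
     \<and> (\<forall>a. \<forall>T\<in>A. op_scale a T \<in> A) \<and> (\<forall>T\<in>A. adj T \<in> A)"

definition wot_closure :: "'h::complex_inner_space op set \<Rightarrow> 'h op set" where
  "wot_closure A = {X \<in> BH. \<forall>F :: ('h \<times> 'h) set. finite F \<longrightarrow>
     (\<forall>e>0. \<exists>a\<in>A. \<forall>(x, y)\<in>F. cmod (cinner (X x) y - cinner (a x) y) < e)}"

text \<open>Ultraweak (sigma-weak) closure in B(H): basic neighbourhoods are given by finitely many
  seminorms \<open>T \<mapsto> |\<Sum>i. \<langle>T x_i, y_i\<rangle>|\<close> with square-summable sequences.\<close>
definition ultraweak_closure :: "'h::complex_inner_space op set \<Rightarrow> 'h op set" where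
  "ultraweak_closure A = {X \<in> BH. \<forall>(k::nat) (x :: nat \<Rightarrow> nat \<Rightarrow> 'h) (y :: nat \<Rightarrow> nat \<Rightarrow> 'h).
     (\<forall>j<k. summable (\<lambda>i. (hnorm (x j i))\<^sup>2) \<and> summable (\<lambda>i. (hnorm (y j i))\<^sup>2)) \<longrightarrow>
     (\<forall>e>0. \<exists>a\<in>A. \<forall>j<k. cmod (\<Sum>i. cinner (X (x j i)) (y j i) - cinner (a (x j i)) (y j i)) < e)}"

definition von_neumann_algebra :: "'h::complex_inner_space op set \<Rightarrow> bool" where
  "von_neumann_algebra A \<longleftrightarrow> star_subalgebra A \<and> wot_closure A \<subseteq> A"

text \<open>Finite-dimensional C*-subalgebra of B(H) containing I (norm-closedness is automatic
  for a finite-dimensional subspace).\<close>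
definition fin_dim_C_star :: "'h::complex_inner_space op set \<Rightarrow> bool" where
  "fin_dim_C_star A \<longleftrightarrow> star_subalgebra A \<and> (\<exists>B. finite B \<and> B \<subseteq> A \<and> op_span B = A)"

definition commutant :: "'h::complex_inner_space op set \<Rightarrow> 'h op set" where
  "commutant A = {T \<in> BH. \<forall>a\<in>A. T \<circ> a = a \<circ> T}"

definition unitaries :: "'h::complex_inner_space op set \<Rightarrow> 'h op set" where
  "unitaries A = {V \<in> A. V \<circ> adj V = id \<and> adj V \<circ> V = id}"

definition finite_unitary_group :: "'h::complex_inner_space op set \<Rightarrow> 'h op set \<Rightarrow> bool" where
  "finite_unitary_group U A \<longleftrightarrow> finite U \<and> U \<subseteq> unitaries A \<and> id \<in> U
     \<and> (\<forall>V\<in>U. \<forall>W\<in>U. V \<circ> W \<in> U) \<and> (\<forall>V\<in>U. adj V \<in> U)"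

definition cond_exp :: "('h::complex_inner_space op \<Rightarrow> 'h op) \<Rightarrow> 'h op set \<Rightarrow> 'h op set \<Rightarrow> bool" where
  "cond_exp \<Psi> S M \<longleftrightarrow> \<Psi> ` S = M
     \<and> (\<forall>T\<in>S. \<Psi> (\<Psi> T) = \<Psi> T)
     \<and> (\<forall>T1\<in>S. \<forall>T2\<in>S. \<Psi> (op_plus T1 T2) = op_plus (\<Psi> T1) (\<Psi> T2))
     \<and> (\<forall>a. \<forall>T\<in>S. \<Psi> (op_scale a T) = op_scale a (\<Psi> T))
     \<and> Sup {opnorm (\<Psi> T) | T. T \<in> S \<and> opnorm T \<le> 1} = 1"

definition unitary_conv_hull :: "'h::complex_inner_space op set \<Rightarrow> 'h op \<Rightarrow> 'h op set" where
  "unitary_conv_hull S T = {(\<lambda>x. \<Sum>i<k. complex_of_real (c i) *\<^sub>C V i (T (adj (V i) x)))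
     | k (c :: nat \<Rightarrow> real) V. (\<forall>i<k. 0 \<le> c i \<and> V i \<in> unitaries S) \<and> (\<Sum>i<k. c i) = 1}"

definition proper_cond_exp :: "('h::complex_inner_space op \<Rightarrow> 'h op) \<Rightarrow> 'h op set \<Rightarrow> 'h op set \<Rightarrow> bool" where
  "proper_cond_exp \<Psi> S M \<longleftrightarrow> cond_exp \<Psi> S M
     \<and> (\<forall>T\<in>S. \<Psi> T \<in> wot_closure (unitary_conv_hull S T))"

definition free_ultrafilter :: "nat filter \<Rightarrow> bool" where
  "free_ultrafilter p \<longleftrightarrow> p \<noteq> bot
     \<and> (\<forall>P. eventually P p \<or> eventually (\<lambda>n. \<not> P n) p)
     \<and> (\<forall>n. eventually (\<lambda>m. m \<noteq> n) p)"

definition unitary_average :: "'h::complex_inner_space op set \<Rightarrow> 'h op \<Rightarrow> 'h op" where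
  "unitary_average U T = (\<lambda>x. (1 / of_nat (card U)) *\<^sub>C (\<Sum>V\<in>U. V (T (adj V x))))"

definition Phi_tp :: "(nat \<Rightarrow> 'h::complex_inner_space op set) \<Rightarrow> nat filter \<Rightarrow> 'h op \<Rightarrow> 'h op" where
  "Phi_tp U p T = (THE S. S \<in> BH \<and>
     (\<forall>x y. ((\<lambda>n. cinner (unitary_average (U n) T x) y) \<longlongrightarrow> cinner (S x) y) p))"

end

theory Submission
  imports Defs "HOL-Analysis.Analysis"
begin

global_interpretation cvs: vector_space "scaleC :: complex \<Rightarrow> 'a \<Rightarrow> 'a::complex_inner_space"
  by unfold_locales (simp_all add: scaleC_add_right scaleC_add_left scaleC_scaleC scaleC_one)

lemma cinner_add_left: "cinner (x + y) z = cinner x z + cinner y z"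
  by (metis cinner_conj cinner_add_right complex_cnj_add)

lemma cinner_scaleC_left: "cinner (a *\<^sub>C x) y = cnj a * cinner x y"
  by (metis cinner_conj cinner_scaleC_right complex_cnj_mult complex_cnj_cnj)

lemma cinner_zero_right[simp]: "cinner x 0 = 0"
  by (metis add_cancel_right_right add_0 cinner_add_right)

lemma cinner_zero_left[simp]: "cinner 0 x = 0"
  by (metis cinner_conj cinner_zero_right complex_cnj_zero)

lemma cinner_minus_right: "cinner x (- y) = - cinner x y"
proof -
  have "cinner x (- y) + cinner x y = 0"
    by (simp flip: cinner_add_right)
  then show ?thesis by (simp add: eq_neg_iff_add_eq_0)
qed

lemma cinner_minus_left: "cinner (- x) y = - cinner x y"
proof -
  have "cinner (- x) y + cinner x y = 0"
    by (simp flip: cinner_add_left)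
  then show ?thesis by (simp add: eq_neg_iff_add_eq_0)
qed

lemma cinner_diff_right: "cinner x (y - z) = cinner x y - cinner x z"
  using cinner_add_right[of x y "- z"] by (simp add: cinner_minus_right)

lemma cinner_diff_left: "cinner (x - z) y = cinner x y - cinner z y"
  using cinner_add_left[of x "- z" y] by (simp add: cinner_minus_left)

lemma cinner_sum_right: "cinner x (\<Sum>i\<in>I. f i) = (\<Sum>i\<in>I. cinner x (f i))"
  by (induction I rule: infinite_finite_induct) (simp_all add: cinner_add_right)

lemma cinner_sum_left: "cinner (\<Sum>i\<in>I. f i) y = (\<Sum>i\<in>I. cinner (f i) y)"
  by (induction I rule: infinite_finite_induct) (simp_all add: cinner_add_left)

lemma Im_cinner_self[simp]: "Im (cinner x x) = 0"
proof -
  have h: "cinner x x = cnj (cinner x x)" by (rule cinner_conj)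
  have "Im (cinner x x) = - Im (cinner x x)" by (subst (1) h) simp
  then show ?thesis by simp
qed

lemma cinner_self_real: "cinner x x = complex_of_real (Re (cinner x x))"
  by (simp add: complex_eq_iff)

lemma hnorm_nonneg[simp]: "0 \<le> hnorm x"
  by (simp add: hnorm_def cinner_nonneg)

lemma hnorm_sq: "(hnorm x)\<^sup>2 = Re (cinner x x)"
  by (simp add: hnorm_def cinner_nonneg)

lemma cinner_self_hnorm: "cinner x x = complex_of_real ((hnorm x)\<^sup>2)"
  by (simp add: hnorm_sq cinner_self_real[symmetric])

lemma hnorm_zero[simp]: "hnorm 0 = 0"
  by (simp add: hnorm_def)

lemma hnorm_eq_zero[simp]: "hnorm x = 0 \<longleftrightarrow> x = 0"
proof
  assume "hnorm x = 0"
  then have "cinner x x = 0" by (simp add: cinner_self_hnorm)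
  then show "x = 0" by (simp add: cinner_eq_zero)
qed simp

lemma hnorm_pos: "x \<noteq> 0 \<Longrightarrow> 0 < hnorm x"
  using hnorm_eq_zero hnorm_nonneg by (metis less_eq_real_def)

lemma hnorm_scaleC: "hnorm (a *\<^sub>C x) = cmod a * hnorm x"
proof -
  have "cinner (a *\<^sub>C x) (a *\<^sub>C x) = (cnj a * a) * cinner x x"
    by (simp add: cinner_scaleC_left cinner_scaleC_right)
  also have "cnj a * a = complex_of_real ((cmod a)\<^sup>2)"
    by (metis complex_norm_square mult.commute)
  finally have "Re (cinner (a *\<^sub>C x) (a *\<^sub>C x)) = (cmod a)\<^sup>2 * (hnorm x)\<^sup>2"
    by (simp add: cinner_self_hnorm)
  then have "(hnorm (a *\<^sub>C x))\<^sup>2 = (cmod a * hnorm x)\<^sup>2"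
    by (simp add: hnorm_sq power_mult_distrib)
  then show ?thesis
    by (simp add: power2_eq_iff_nonneg)
qed

lemma hnorm_minus: "hnorm (- x) = hnorm x"
  by (simp add: hnorm_def cinner_minus_left cinner_minus_right)

lemma hnorm_diff_commute: "hnorm (x - y) = hnorm (y - x)"
  by (metis hnorm_minus minus_diff_eq)

lemma expand_sq:
  "(hnorm (x - t *\<^sub>C y))\<^sup>2 = (hnorm x)\<^sup>2 - 2 * Re (t * cinner x y) + (cmod t)\<^sup>2 * (hnorm y)\<^sup>2"
proof -
  have e1: "cinner (x - t *\<^sub>C y) (x - t *\<^sub>C y) =
      cinner x x - t * cinner x y - cnj t * cinner y x + cnj t * (t * cinner y y)"
    by (simp only: cinner_diff_left cinner_diff_right cinner_scaleC_left cinner_scaleC_right) (simp add: algebra_simps)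
  have "cinner (x - t *\<^sub>C y) (x - t *\<^sub>C y) =
      cinner x x - (t * cinner x y + cnj (t * cinner x y)) + (cnj t * t) * cinner y y"
    unfolding e1 cinner_conj[of y x] complex_cnj_mult by algebra
  moreover have "t * cinner x y + cnj (t * cinner x y) = complex_of_real (2 * Re (t * cinner x y))"
    by (simp add: complex_eq_iff)
  moreover have "cnj t * t = complex_of_real ((cmod t)\<^sup>2)"
    by (metis complex_norm_square mult.commute)
  ultimately have "Re (cinner (x - t *\<^sub>C y) (x - t *\<^sub>C y)) =
      Re (cinner x x) - 2 * Re (t * cinner x y) + (cmod t)\<^sup>2 * Re (cinner y y)"
    by (simp add: cinner_self_hnorm)
  then show ?thesis by (simp add: hnorm_sq)
qed

lemma ta_lemma: "cnj a / complex_of_real r * a = complex_of_real ((cmod a)\<^sup>2 / r)"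
proof -
  have "cnj a / complex_of_real r * a = (a * cnj a) / complex_of_real r"
    by (simp add: field_simps del: complex_mult_cnj)
  also have "a * cnj a = complex_of_real ((cmod a)\<^sup>2)" by (rule complex_norm_square[symmetric])
  finally show ?thesis by simp
qed

lemma expand_opt:
  assumes "y \<noteq> 0"
  shows "(hnorm (x - (cnj (cinner x y) / complex_of_real ((hnorm y)\<^sup>2)) *\<^sub>C y))\<^sup>2
     = (hnorm x)\<^sup>2 - (cmod (cinner x y))\<^sup>2 / (hnorm y)\<^sup>2"
proof -
  define a where "a = cinner x y"
  define r where "r = (hnorm y)\<^sup>2"
  have r: "r > 0" using assms hnorm_pos r_def by auto
  define t where "t = cnj a / complex_of_real r"
  have "(hnorm (x - t *\<^sub>C y))\<^sup>2 = (hnorm x)\<^sup>2 - 2 * Re (t * a) + (cmod t)\<^sup>2 * r"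
    using expand_sq a_def r_def by simp
  also have "t * a = complex_of_real ((cmod a)\<^sup>2 / r)"
    unfolding t_def by (rule ta_lemma)
  also have "(cmod t)\<^sup>2 * r = (cmod a)\<^sup>2 / r"
    unfolding t_def using r by (simp add: norm_divide power2_eq_square)
  finally show ?thesis unfolding t_def a_def r_def by simp
qed

lemma cauchy_schwarz: "cmod (cinner x y) \<le> hnorm x * hnorm y"
proof (cases "y = 0")
  case True then show ?thesis by simp
next
  case False
  have r: "(hnorm y)\<^sup>2 > 0" using False hnorm_pos by auto
  have "0 \<le> (hnorm (x - (cnj (cinner x y) / complex_of_real ((hnorm y)\<^sup>2)) *\<^sub>C y))\<^sup>2" by simp
  also have "\<dots> = (hnorm x)\<^sup>2 - (cmod (cinner x y))\<^sup>2 / (hnorm y)\<^sup>2"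
    by (rule expand_opt[OF False])
  finally have "(cmod (cinner x y))\<^sup>2 / (hnorm y)\<^sup>2 \<le> (hnorm x)\<^sup>2" by simp
  then have "(cmod (cinner x y))\<^sup>2 \<le> (hnorm x)\<^sup>2 * (hnorm y)\<^sup>2" using r by (simp add: divide_le_eq)
  then have "(cmod (cinner x y))\<^sup>2 \<le> (hnorm x * hnorm y)\<^sup>2" by (simp add: power_mult_distrib)
  then show ?thesis
    by (rule power2_le_imp_le) simp
qed

lemma hnorm_add_sq: "(hnorm (x + y))\<^sup>2 = (hnorm x)\<^sup>2 + 2 * Re (cinner x y) + (hnorm y)\<^sup>2"
proof -
  have "x - (-1) *\<^sub>C y = x + y" by (simp add: cvs.scale_minus_left scaleC_one)
  then show ?thesis using expand_sq[of x "-1" y] by simp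
qed

lemma hnorm_triangle: "hnorm (x + y) \<le> hnorm x + hnorm y"
proof -
  have "Re (cinner x y) \<le> hnorm x * hnorm y"
    using cauchy_schwarz[of x y] complex_Re_le_cmod order_trans by blast
  then have "(hnorm (x + y))\<^sup>2 \<le> (hnorm x + hnorm y)\<^sup>2"
    by (simp add: hnorm_add_sq power2_sum)
  then show ?thesis by (rule power2_le_imp_le) simp
qed

lemma hnorm_triangle_diff: "hnorm (x - z) \<le> hnorm (x - y) + hnorm (y - z)"
  using hnorm_triangle[of "x - y" "y - z"] by simp

lemma hnorm_sum: "hnorm (\<Sum>i\<in>I. f i) \<le> (\<Sum>i\<in>I. hnorm (f i))"
proof (induction I rule: infinite_finite_induct)
  case (insert i I)
  then show ?case using hnorm_triangle[of "f i" "sum f I"] by simp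
qed simp_all

lemma parallelogram:
  "(hnorm (x + y))\<^sup>2 + (hnorm (x - y))\<^sup>2 = 2 * (hnorm x)\<^sup>2 + 2 * (hnorm y)\<^sup>2"
  using hnorm_add_sq[of x y] expand_sq[of x 1 y] by (simp add: scaleC_one)

lemma cinner_eq_allI: "(\<And>y. cinner a y = cinner b y) \<Longrightarrow> a = b"
  by (metis cinner_diff_left cinner_eq_zero diff_self eq_iff_diff_eq_0)

lemma cinner_eq_allI2: "(\<And>y. cinner y a = cinner y b) \<Longrightarrow> a = b"
  by (metis cinner_diff_right cinner_eq_zero diff_self eq_iff_diff_eq_0)


lemma scaleC_two: "(2::complex) *\<^sub>C w = w + w"
  using scaleC_add_left[of 1 1 w] by (simp add: scaleC_one one_add_one)

lemma sq_aux: "(s::real) > 0 \<Longrightarrow> (d + 1 / s)\<^sup>2 = d\<^sup>2 + (2 * d + 1 / s) / s"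
  by (simp add: power2_eq_square field_simps)

lemma riesz:
  fixes g :: "'a::complex_hilbert_space \<Rightarrow> complex"
  assumes gadd: "\<And>x y. g (x + y) = g x + g y" and gsc: "\<And>a x. g (a *\<^sub>C x) = a * g x"
    and bd: "\<And>x. cmod (g x) \<le> K * hnorm x"
  shows "\<exists>z. \<forall>y. g y = cinner z y"
proof (cases "\<forall>y. g y = 0")
  case True then show ?thesis by (intro exI[of _ 0]) simp
next
  case False
  then obtain w where gw: "g w \<noteq> 0" by blast
  interpret gA: additive g by unfold_locales (rule gadd)
  define K' where "K' = \<bar>K\<bar> + 1"
  have K': "K' > 0" unfolding K'_def by simp
  have bd': "cmod (g x) \<le> K' * hnorm x" for x
  proof -
    have "K * hnorm x \<le> (\<bar>K\<bar> + 1) * hnorm x" by (rule mult_right_mono) auto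
    then show ?thesis using bd[of x] unfolding K'_def by linarith
  qed
  define D where "D = {hnorm (w - m) | m. g m = 0}"
  define d where "d = Inf D"
  have Dne: "D \<noteq> {}" unfolding D_def using gA.zero by blast
  have Dbd: "bdd_below D" unfolding D_def bdd_below_def by (auto intro!: exI[of _ 0])
  have d_le: "d \<le> hnorm (w - m)" if "g m = 0" for m
    unfolding d_def using Dbd that by (auto intro!: cInf_lower simp: D_def)
  have d0: "0 \<le> d" unfolding d_def using Dne by (intro cInf_greatest) (auto simp: D_def)
  have "\<exists>m. g m = 0 \<and> hnorm (w - m) < d + 1 / real (Suc k)" for k
  proof -
    have "Inf D < d + 1 / real (Suc k)" unfolding d_def by simp
    from cInf_lessD[OF Dne this] show ?thesis unfolding D_def by auto
  qed
  then obtain ms where ms0: "\<And>k. g (ms k) = 0"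
    and msd: "\<And>k. hnorm (w - ms k) < d + 1 / real (Suc k)" by metis
  define C where "C = 2 * d + 1"
  have C: "C > 0" using d0 C_def by simp
  have msq: "(hnorm (w - ms k))\<^sup>2 \<le> d\<^sup>2 + C / real (Suc k)" for k
  proof -
    have "(hnorm (w - ms k))\<^sup>2 \<le> (d + 1 / real (Suc k))\<^sup>2"
      using msd[of k] by (intro power_mono) auto
    also have "\<dots> = d\<^sup>2 + (2 * d + 1 / real (Suc k)) / real (Suc k)"
      using sq_aux[of "real (Suc k)" d] by simp
    also have "\<dots> \<le> d\<^sup>2 + C / real (Suc k)"
      unfolding C_def by (intro add_left_mono divide_right_mono) auto
    finally show ?thesis .
  qed
  have cauchy_bd: "(hnorm (ms k - ms l))\<^sup>2 \<le> 2 * C / real (Suc k) + 2 * C / real (Suc l)" for k l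
  proof -
    define a where "a = w - ms k"
    define b where "b = w - ms l"
    define mid where "mid = (1/2 :: complex) *\<^sub>C (ms k + ms l)"
    have gmid: "g mid = 0" unfolding mid_def by (simp add: gsc gadd ms0)
    have "a + b = (2::complex) *\<^sub>C (w - mid)"
      unfolding a_def b_def mid_def
      by (simp add: cvs.scale_right_diff_distrib scaleC_scaleC scaleC_add_left scaleC_one
          cvs.scale_right_distrib algebra_simps scaleC_two)
    then have "hnorm (a + b) = 2 * hnorm (w - mid)" by (simp add: hnorm_scaleC)
    then have ab: "(hnorm (a + b))\<^sup>2 \<ge> 4 * d\<^sup>2"
      using d_le[OF gmid] d0 by (simp add: power2_eq_square mult_mono)
    have "a - b = ms l - ms k" unfolding a_def b_def by simp
    then have "(hnorm (ms k - ms l))\<^sup>2 = 2 * (hnorm a)\<^sup>2 + 2 * (hnorm b)\<^sup>2 - (hnorm (a + b))\<^sup>2"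
      using parallelogram[of a b] hnorm_diff_commute[of "ms k" "ms l"] by simp
    also have "\<dots> \<le> 2 * (d\<^sup>2 + C / real (Suc k)) + 2 * (d\<^sup>2 + C / real (Suc l)) - 4 * d\<^sup>2"
      using msq[of k] msq[of l] ab unfolding a_def b_def by simp
    finally show ?thesis by simp
  qed
  have "\<forall>e>0. \<exists>N::nat. \<forall>m\<ge>N. \<forall>n\<ge>N. sqrt (Re (cinner (ms m - ms n) (ms m - ms n))) < e"
  proof (intro allI impI)
    fix e :: real assume e: "e > 0"
    obtain N :: nat where N: "4 * C / e\<^sup>2 < real N" using reals_Archimedean2 by blast
    have "4 * C < real N * e\<^sup>2" using N e by (simp add: divide_less_eq)
    moreover have "real N * e\<^sup>2 \<le> real (Suc N) * e\<^sup>2" by (rule mult_right_mono) auto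
    ultimately have "4 * C < e\<^sup>2 * real (Suc N)" by (simp add: mult.commute)
    then have N': "4 * C / real (Suc N) < e\<^sup>2"
      by (simp add: divide_less_eq)
    show "\<exists>N::nat. \<forall>m\<ge>N. \<forall>n\<ge>N. sqrt (Re (cinner (ms m - ms n) (ms m - ms n))) < e"
    proof (intro exI allI impI)
      fix m n assume mn: "N \<le> m" "N \<le> n"
      have "C / real (Suc m) \<le> C / real (Suc N)" "C / real (Suc n) \<le> C / real (Suc N)"
        using mn C by (auto intro!: divide_left_mono)
      then have "(hnorm (ms m - ms n))\<^sup>2 < e\<^sup>2"
        using cauchy_bd[of m n] N' by simp
      then have "hnorm (ms m - ms n) < e" using e by (simp add: power_less_imp_less_base)
      then show "sqrt (Re (cinner (ms m - ms n) (ms m - ms n))) < e" by (simp add: hnorm_def)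
    qed
  qed
  from hilbert_complete[OF this] obtain L where
    L: "\<And>e. e > 0 \<Longrightarrow> \<exists>N::nat. \<forall>n\<ge>N. hnorm (ms n - L) < e"
    unfolding hnorm_def[symmetric] by blast
  have gL: "g L = 0"
  proof (rule ccontr)
    assume ne: "g L \<noteq> 0"
    define e where "e = cmod (g L) / K'"
    have e: "e > 0" using ne K' e_def by simp
    obtain N where "\<forall>n\<ge>N. hnorm (ms n - L) < e" using L[OF e] by blast
    then have h: "hnorm (L - ms N) < e" using hnorm_diff_commute[of L "ms N"] by simp
    have "g L = g (L - ms N)" by (simp add: gA.diff ms0)
    then have "cmod (g L) \<le> K' * hnorm (L - ms N)" using bd' by simp
    also have "\<dots> < K' * e" using h K' by simp
    also have "\<dots> = cmod (g L)" using K' e_def by simp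
    finally show False by simp
  qed
  define u where "u = w - L"
  have "hnorm u \<le> d"
  proof (rule field_le_epsilon)
    fix e :: real assume e: "e > 0"
    obtain N where N: "\<forall>n\<ge>N. hnorm (ms n - L) < e / 2" using L[of "e/2"] e by auto
    obtain M :: nat where M: "2 / e < real M" using reals_Archimedean2 by blast
    define n where "n = max N M"
    have "real M \<le> real n" unfolding n_def by simp
    then have "2 / e < real (Suc n)" using M by simp
    then have "2 < real (Suc n) * e" using e by (simp add: divide_less_eq)
    then have "1 / real (Suc n) < e / 2" using e by (simp add: field_simps)
    moreover have "hnorm u \<le> hnorm (w - ms n) + hnorm (ms n - L)"
      unfolding u_def by (rule hnorm_triangle_diff)
    moreover have "hnorm (ms n - L) < e / 2" using N n_def by simp
    ultimately show "hnorm u \<le> d + e" using msd[of n] by simp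
  qed
  have gu: "g u = g w" unfolding u_def by (simp add: gA.diff gL)
  have u0: "u \<noteq> 0" using gu gw gA.zero by auto
  have orth: "cinner u y = 0" if gy: "g y = 0" for y
  proof (cases "y = 0")
    case True then show ?thesis by simp
  next
    case False
    define t where "t = cnj (cinner u y) / complex_of_real ((hnorm y)\<^sup>2)"
    have "g (L + t *\<^sub>C y) = 0" by (simp add: gadd gsc gL gy)
    then have "d \<le> hnorm (w - (L + t *\<^sub>C y))" by (rule d_le)
    also have "w - (L + t *\<^sub>C y) = u - t *\<^sub>C y" unfolding u_def by simp
    finally have "hnorm u \<le> hnorm (u - t *\<^sub>C y)" using \<open>hnorm u \<le> d\<close> by simp
    then have "(hnorm u)\<^sup>2 \<le> (hnorm (u - t *\<^sub>C y))\<^sup>2" by (simp add: power_mono)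
    also have "\<dots> = (hnorm u)\<^sup>2 - (cmod (cinner u y))\<^sup>2 / (hnorm y)\<^sup>2"
      unfolding t_def by (rule expand_opt[OF False])
    finally have "(cmod (cinner u y))\<^sup>2 / (hnorm y)\<^sup>2 \<le> 0" by simp
    moreover have "(hnorm y)\<^sup>2 > 0" using False hnorm_pos by simp
    ultimately have "(cmod (cinner u y))\<^sup>2 \<le> 0" by (simp add: divide_le_0_iff)
    then show ?thesis by simp
  qed
  have uu: "cinner u u \<noteq> 0" using u0 cinner_eq_zero by blast
  show ?thesis
  proof (intro exI allI)
    fix y
    have "g ((g u) *\<^sub>C y - (g y) *\<^sub>C u) = 0" by (simp add: gA.diff gsc mult.commute)
    then have "cinner u ((g u) *\<^sub>C y - (g y) *\<^sub>C u) = 0" by (rule orth)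
    then have "g u * cinner u y = g y * cinner u u"
      by (simp add: cinner_diff_right cinner_scaleC_right)
    then have "g y = (g u / cinner u u) * cinner u y" using uu by (simp add: field_simps)
    also have "\<dots> = cinner (cnj (g u / cinner u u) *\<^sub>C u) y" by (simp add: cinner_scaleC_left)
    finally show "g y = cinner (cnj (g u / cinner u u) *\<^sub>C u) y" .
  qed
qed


lemma bh_add: "T \<in> BH \<Longrightarrow> T (x + y) = T x + T y"
  by (simp add: BH_def bounded_op_def)

lemma bh_scale: "T \<in> BH \<Longrightarrow> T (a *\<^sub>C x) = a *\<^sub>C T x"
  by (simp add: BH_def bounded_op_def)

lemma bh_zero: "T \<in> BH \<Longrightarrow> T 0 = 0"
  using bh_scale[of T 0 0] by simp

lemma bh_minus: "T \<in> BH \<Longrightarrow> T (- x) = - T x"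
  using bh_scale[of T "-1" x] by (simp add: cvs.scale_minus_left scaleC_one)

lemma bh_diff: "T \<in> BH \<Longrightarrow> T (x - y) = T x - T y"
  using bh_add[of T x "- y"] bh_minus[of T y] by simp

lemma bh_sum: "T \<in> BH \<Longrightarrow> T (\<Sum>i\<in>I. f i) = (\<Sum>i\<in>I. T (f i))"
  by (induction I rule: infinite_finite_induct) (simp_all add: bh_add bh_zero)

lemma bh_bound: "T \<in> BH \<Longrightarrow> \<exists>K. \<forall>x. hnorm (T x) \<le> K * hnorm x"
  by (simp add: BH_def bounded_op_def)

lemma BH_I:
  assumes "\<And>x y. T (x + y) = T x + T y" "\<And>a x. T (a *\<^sub>C x) = a *\<^sub>C T x"
    "\<And>x. hnorm (T x) \<le> K * hnorm x"
  shows "T \<in> BH"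
  using assms unfolding BH_def bounded_op_def by blast

lemma sesq_rep:
  fixes B :: "'a::complex_hilbert_space \<Rightarrow> 'a \<Rightarrow> complex"
  assumes r1: "\<And>x y z. B x (y + z) = B x y + B x z"
    and r2: "\<And>x a y. B x (a *\<^sub>C y) = a * B x y"
    and l1: "\<And>x y z. B (x + y) z = B x z + B y z"
    and l2: "\<And>a x y. B (a *\<^sub>C x) y = cnj a * B x y"
    and bd: "\<And>x y. cmod (B x y) \<le> K * hnorm x * hnorm y"
  shows "\<exists>S\<in>BH. \<forall>x y. B x y = cinner (S x) y"
proof -
  define K' where "K' = max K 0"
  have bd': "cmod (B x y) \<le> K' * hnorm x * hnorm y" for x y
  proof -
    have "K * (hnorm x * hnorm y) \<le> K' * (hnorm x * hnorm y)"
      unfolding K'_def by (rule mult_right_mono) auto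
    then show ?thesis using bd[of x y] by (simp add: mult.assoc)
  qed
  have "\<exists>z. \<forall>y. B x y = cinner z y" for x
    by (rule riesz[where K = "K' * hnorm x"]) (use r1 r2 bd' in auto)
  then obtain S where S: "\<And>x y. B x y = cinner (S x) y" by metis
  have "S \<in> BH"
  proof (rule BH_I)
    show "S (x + y) = S x + S y" for x y
      by (rule cinner_eq_allI) (simp add: S[symmetric] l1 cinner_add_left)
    show "S (a *\<^sub>C x) = a *\<^sub>C S x" for a x
      by (rule cinner_eq_allI) (simp add: S[symmetric] l2 cinner_scaleC_left)
    show "hnorm (S x) \<le> K' * hnorm x" for x
    proof (cases "S x = 0")
      case True then show ?thesis unfolding K'_def by simp
    next
      case False
      have "(hnorm (S x))\<^sup>2 = Re (B x (S x))" by (simp add: S hnorm_sq)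
      also have "\<dots> \<le> cmod (B x (S x))" by (rule complex_Re_le_cmod)
      also have "\<dots> \<le> K' * hnorm x * hnorm (S x)" by (rule bd')
      finally have "hnorm (S x) * hnorm (S x) \<le> (K' * hnorm x) * hnorm (S x)"
        by (simp add: power2_eq_square)
      then show ?thesis using hnorm_pos[OF False] by simp
    qed
  qed
  then show ?thesis using S by blast
qed

lemma adj_exists:
  fixes T :: "'a::complex_hilbert_space op"
  assumes T: "T \<in> BH"
  shows "\<exists>S. \<forall>x y. cinner (T x) y = cinner x (S y)"
proof -
  obtain K where K: "\<And>x. hnorm (T x) \<le> K * hnorm x" using bh_bound[OF T] by blast
  have "\<exists>S\<in>BH. \<forall>y x. cinner y (T x) = cinner (S y) x"
  proof (rule sesq_rep[where K = K])
    show "cmod (cinner y (T x)) \<le> K * hnorm y * hnorm x" for y x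
    proof -
      have "cmod (cinner y (T x)) \<le> hnorm y * hnorm (T x)" by (rule cauchy_schwarz)
      also have "\<dots> \<le> hnorm y * (K * hnorm x)" by (rule mult_left_mono) (use K in auto)
      finally show ?thesis by (simp add: mult_ac)
    qed
  qed (simp_all add: cinner_add_left cinner_add_right cinner_scaleC_left cinner_scaleC_right
        bh_add[OF T] bh_scale[OF T])
  then obtain S where S: "\<And>y x. cinner y (T x) = cinner (S y) x" by blast
  show ?thesis
  proof (intro exI allI)
    fix x y
    show "cinner (T x) y = cinner x (S y)"
      using S[of y x] by (metis cinner_conj)
  qed
qed

lemma adj_prop:
  fixes T :: "'a::complex_hilbert_space op"
  assumes T: "T \<in> BH"
  shows "cinner (T x) y = cinner x (adj T y)"
proof -
  obtain S where S: "\<forall>x y. cinner (T x) y = cinner x (S y)" using adj_exists[OF T] by blast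
  have "\<exists>!S. \<forall>x y. cinner (T x) y = cinner x (S y)"
  proof (rule ex1I[of _ S])
    fix S' assume S': "\<forall>x y. cinner (T x) y = cinner x (S' y)"
    show "S' = S"
    proof
      fix y show "S' y = S y" by (rule cinner_eq_allI2) (use S S' in metis)
    qed
  qed (rule S)
  from theI'[OF this] show ?thesis unfolding adj_def by blast
qed

lemma opnorm_facts:
  fixes T :: "'a::complex_inner_space op"
  assumes T: "T \<in> BH"
  shows "0 \<le> opnorm T" "hnorm (T x) \<le> opnorm T * hnorm x"
proof -
  obtain K where K: "\<And>x. hnorm (T x) \<le> K * hnorm x" using bh_bound[OF T] by blast
  define X where "X = {hnorm (T x) | x. hnorm x \<le> 1}"
  have opX: "opnorm T = Sup X" unfolding opnorm_def X_def by simp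
  have bdd: "bdd_above X"
  proof (rule bdd_aboveI)
    fix r assume "r \<in> X"
    then obtain x where x: "r = hnorm (T x)" "hnorm x \<le> 1" unfolding X_def by blast
    have "K * hnorm x \<le> max K 0 * hnorm x" by (rule mult_right_mono) auto
    also have "\<dots> \<le> max K 0 * 1" by (rule mult_left_mono) (use x in auto)
    finally show "r \<le> max K 0" using K[of x] x by simp
  qed
  have zX: "0 \<in> X" unfolding X_def using bh_zero[OF T] by (auto intro!: exI[of _ 0])
  show nn: "0 \<le> opnorm T" unfolding opX using cSup_upper[OF zX bdd] .
  show "hnorm (T x) \<le> opnorm T * hnorm x"
  proof (cases "x = 0")
    case True then show ?thesis using bh_zero[OF T] by simp
  next
    case False
    define c where "c = hnorm x"
    have c: "c > 0" using False hnorm_pos c_def by simp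
    define x' where "x' = complex_of_real (1 / c) *\<^sub>C x"
    have "hnorm x' = 1" unfolding x'_def using c False by (simp add: hnorm_scaleC c_def norm_divide)
    then have "hnorm (T x') \<in> X" unfolding X_def by auto
    then have "hnorm (T x') \<le> opnorm T" unfolding opX using bdd by (rule cSup_upper)
    moreover have "hnorm (T x') = hnorm (T x) / c"
      unfolding x'_def using c by (simp add: bh_scale[OF T] hnorm_scaleC norm_divide)
    ultimately show ?thesis using c by (simp add: c_def divide_le_eq mult.commute)
  qed
qed

lemma opnorm_le:
  fixes T :: "'a::complex_inner_space op"
  assumes "0 \<le> c" "\<And>x. hnorm (T x) \<le> c * hnorm x"
  shows "opnorm T \<le> c"
  unfolding opnorm_def
proof (rule cSup_least)
  show "{hnorm (T x) |x. hnorm x \<le> 1} \<noteq> {}" by (auto intro!: exI[of _ 0])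
  fix r assume "r \<in> {hnorm (T x) |x. hnorm x \<le> 1}"
  then obtain x where x: "r = hnorm (T x)" "hnorm x \<le> 1" by blast
  have "c * hnorm x \<le> c * 1" by (rule mult_left_mono) (use assms x in auto)
  then show "r \<le> c" using assms(2)[of x] x by simp
qed

lemma id_BH: "id \<in> BH"
  by (rule BH_I[where K = 1]) auto

lemma opnorm_id:
  assumes "\<exists>x::'a::complex_inner_space. x \<noteq> 0"
  shows "opnorm (id :: 'a op) = 1"
proof (rule antisym)
  show "opnorm (id :: 'a op) \<le> 1" by (rule opnorm_le) auto
  obtain x :: 'a where x: "x \<noteq> 0" using assms by blast
  have "hnorm x \<le> opnorm (id :: 'a op) * hnorm x" using opnorm_facts(2)[OF id_BH, of x] by simp
  then show "1 \<le> opnorm (id :: 'a op)" using hnorm_pos[OF x] by simp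
qed

lemma ultra_lim:
  fixes f :: "nat \<Rightarrow> complex"
  assumes p: "free_ultrafilter p" and bd: "\<And>n. cmod (f n) \<le> M"
  shows "\<exists>L. (f \<longlongrightarrow> L) p"
proof -
  have pb: "p \<noteq> bot" and pu: "\<And>P. eventually P p \<or> eventually (\<lambda>n. \<not> P n) p"
    using p unfolding free_ultrafilter_def by auto
  define F where "F = filtermap f p"
  have Fb: "F \<noteq> bot" unfolding F_def using pb by (simp add: filtermap_bot_iff)
  have "eventually (\<lambda>z. z \<in> cball 0 M) F"
    unfolding F_def eventually_filtermap by (intro always_eventually allI) (simp add: mem_cball dist_norm bd)
  then obtain L where L: "inf (nhds L) F \<noteq> bot"
    using compact_cball[of 0 M] Fb unfolding compact_filter by blast
  have "(f \<longlongrightarrow> L) p"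
  proof (rule topological_tendstoI)
    fix S assume S: "open S" "L \<in> S"
    show "eventually (\<lambda>n. f n \<in> S) p"
    proof (rule ccontr)
      assume "\<not> eventually (\<lambda>n. f n \<in> S) p"
      then have "eventually (\<lambda>n. f n \<notin> S) p" using pu by blast
      then have "eventually (\<lambda>z. z \<notin> S) F" unfolding F_def eventually_filtermap .
      moreover have "eventually (\<lambda>z. z \<in> S) (nhds L)" using S by (rule eventually_nhds_in_open)
      ultimately have "eventually (\<lambda>z. False) (inf (nhds L) F)"
        unfolding eventually_inf by blast
      then show False using L by (simp add: eventually_False)
    qed
  qed
  then show ?thesis by blast
qed


lemma star_BH: "star_subalgebra S \<Longrightarrow> S \<subseteq> BH"
  by (simp add: star_subalgebra_def)

lemma star_sum:
  assumes S: "star_subalgebra S" and I: "finite I" and f: "\<And>i. i \<in> I \<Longrightarrow> f i \<in> S"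
  shows "(\<lambda>x. \<Sum>i\<in>I. f i x) \<in> S"
  using I f
proof (induction I rule: finite_induct)
  case empty
  have "op_scale 0 id \<in> S" using S unfolding star_subalgebra_def by blast
  moreover have "(\<lambda>x. \<Sum>i\<in>{}. f i x) = op_scale 0 id" unfolding op_scale_def by (simp add: fun_eq_iff)
  ultimately show ?case by (simp only:)
next
  case (insert i I)
  have "op_plus (f i) (\<lambda>x. \<Sum>i\<in>I. f i x) \<in> S"
    using S insert unfolding star_subalgebra_def by blast
  moreover have "op_plus (f i) (\<lambda>x. \<Sum>i\<in>I. f i x) = (\<lambda>x. \<Sum>i\<in>insert i I. f i x)"
    using insert unfolding op_plus_def by (simp add: fun_eq_iff)
  ultimately show ?case by simp
qed

lemma op_plus_BH: "S \<in> BH \<Longrightarrow> T \<in> BH \<Longrightarrow> op_plus S T \<in> BH"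
proof -
  assume S: "S \<in> BH" and T: "T \<in> BH"
  show ?thesis
  proof (rule BH_I[where K = "opnorm S + opnorm T"])
    show "op_plus S T (x + y) = op_plus S T x + op_plus S T y" for x y
      by (simp add: op_plus_def bh_add[OF S] bh_add[OF T] algebra_simps)
    show "op_plus S T (a *\<^sub>C x) = a *\<^sub>C op_plus S T x" for a x
      by (simp add: op_plus_def bh_scale[OF S] bh_scale[OF T] scaleC_add_right)
    show "hnorm (op_plus S T x) \<le> (opnorm S + opnorm T) * hnorm x" for x
      using hnorm_triangle[of "S x" "T x"] opnorm_facts(2)[OF S, of x] opnorm_facts(2)[OF T, of x]
      by (simp add: op_plus_def algebra_simps)
  qed
qed

lemma op_scale_BH: "T \<in> BH \<Longrightarrow> op_scale a T \<in> BH"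
proof -
  assume T: "T \<in> BH"
  show ?thesis
  proof (rule BH_I[where K = "cmod a * opnorm T"])
    show "op_scale a T (x + y) = op_scale a T x + op_scale a T y" for x y
      by (simp add: op_scale_def bh_add[OF T] scaleC_add_right)
    show "op_scale a T (b *\<^sub>C x) = b *\<^sub>C op_scale a T x" for b x
      by (simp add: op_scale_def bh_scale[OF T] scaleC_scaleC mult.commute)
    show "hnorm (op_scale a T x) \<le> (cmod a * opnorm T) * hnorm x" for x
      using opnorm_facts(2)[OF T, of x]
      by (simp add: op_scale_def hnorm_scaleC mult.assoc mult_left_mono)
  qed
qed

lemma comm_closure:
  fixes C X :: "'h::complex_hilbert_space op"
  assumes C: "C \<in> BH" and comm: "\<And>a. a \<in> A0 \<Longrightarrow> C \<circ> a = a \<circ> C"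
    and X: "X \<in> ultraweak_closure A0"
  shows "C \<circ> X = X \<circ> C"
proof (rule ext, rule cinner_eq_allI)
  fix x y
  have key: "\<forall>(k::nat) (x::nat\<Rightarrow>nat\<Rightarrow>'h) (y::nat\<Rightarrow>nat\<Rightarrow>'h).
     (\<forall>j<k. summable (\<lambda>i. (hnorm (x j i))\<^sup>2) \<and> summable (\<lambda>i. (hnorm (y j i))\<^sup>2)) \<longrightarrow>
     (\<forall>e>0. \<exists>a\<in>A0. \<forall>j<k. cmod (\<Sum>i. cinner (X (x j i)) (y j i) - cinner (a (x j i)) (y j i)) < e)"
    using X unfolding ultraweak_closure_def by blast
  define xv :: "nat \<Rightarrow> 'h" where "xv j = (if j = 0 then x else C x)" for j
  define yv :: "nat \<Rightarrow> 'h" where "yv j = (if j = 0 then adj C y else y)" for j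
  define xs :: "nat \<Rightarrow> nat \<Rightarrow> 'h" where "xs j i = (if i = 0 then xv j else 0)" for j i
  define ys :: "nat \<Rightarrow> nat \<Rightarrow> 'h" where "ys j i = (if i = 0 then yv j else 0)" for j i
  have summ1: "summable (\<lambda>i. (hnorm (xs j i))\<^sup>2)" for j
  proof -
    have "(\<lambda>i. (hnorm (xs j i))\<^sup>2) = (\<lambda>i. if i = 0 then (hnorm (xv j))\<^sup>2 else 0)"
      by (auto simp: xs_def)
    then show ?thesis using sums_single[of 0 "\<lambda>_. (hnorm (xv j))\<^sup>2"] sums_summable by fastforce
  qed
  have summ2: "summable (\<lambda>i. (hnorm (ys j i))\<^sup>2)" for j
  proof -
    have "(\<lambda>i. (hnorm (ys j i))\<^sup>2) = (\<lambda>i. if i = 0 then (hnorm (yv j))\<^sup>2 else 0)"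
      by (auto simp: ys_def)
    then show ?thesis using sums_single[of 0 "\<lambda>_. (hnorm (yv j))\<^sup>2"] sums_summable by fastforce
  qed
  have sumeq: "(\<Sum>i. cinner (X (xs j i)) (ys j i) - cinner (a (xs j i)) (ys j i))
      = cinner (X (xv j)) (yv j) - cinner (a (xv j)) (yv j)" for a :: "'h op" and j
  proof -
    have "(\<lambda>i. cinner (X (xs j i)) (ys j i) - cinner (a (xs j i)) (ys j i))
        = (\<lambda>i. if i = 0 then cinner (X (xv j)) (yv j) - cinner (a (xv j)) (yv j) else 0)"
      by (auto simp: xs_def ys_def)
    then show ?thesis
      using sums_single[of 0 "\<lambda>_. cinner (X (xv j)) (yv j) - cinner (a (xv j)) (yv j)"]
      by (simp add: sums_iff)
  qed
  define D where "D = cinner (C (X x)) y - cinner (X (C x)) y"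
  have small: "cmod D < 2 * e" if e: "e > 0" for e
  proof -
    have "\<exists>a\<in>A0. \<forall>j<2. cmod (\<Sum>i. cinner (X (xs j i)) (ys j i) - cinner (a (xs j i)) (ys j i)) < e"
      by (rule key[rule_format, of 2 xs ys e]) (use summ1 summ2 e in auto)
    then obtain a where a: "a \<in> A0"
      and h: "\<And>j. j < 2 \<Longrightarrow> cmod (cinner (X (xv j)) (yv j) - cinner (a (xv j)) (yv j)) < e"
      unfolding sumeq by blast
    have h0: "cmod (cinner (X x) (adj C y) - cinner (a x) (adj C y)) < e"
      using h[of 0] by (simp add: xv_def yv_def)
    have h1: "cmod (cinner (X (C x)) y - cinner (a (C x)) y) < e"
      using h[of 1] by (simp add: xv_def yv_def)
    have e1: "cinner (C (X x)) y = cinner (X x) (adj C y)" by (rule adj_prop[OF C])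
    have "cinner (a x) (adj C y) = cinner (C (a x)) y" by (rule adj_prop[OF C, symmetric])
    also have "C (a x) = a (C x)" using comm[OF a] by (simp add: fun_eq_iff)
    finally have e2: "cinner (a x) (adj C y) = cinner (a (C x)) y" .
    have "D = (cinner (X x) (adj C y) - cinner (a x) (adj C y)) - (cinner (X (C x)) y - cinner (a (C x)) y)"
      unfolding D_def e1 e2 by simp
    then have "cmod D \<le> cmod (cinner (X x) (adj C y) - cinner (a x) (adj C y)) + cmod (cinner (X (C x)) y - cinner (a (C x)) y)"
      by (simp add: norm_triangle_ineq4)
    then show ?thesis using h0 h1 by simp
  qed
  have "D = 0"
  proof (rule ccontr)
    assume "D \<noteq> 0"
    then have "cmod D < 2 * (cmod D / 2)" using small[of "cmod D / 2"] by simp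
    then show False by simp
  qed
  then show "cinner ((C \<circ> X) x) y = cinner ((X \<circ> C) x) y" unfolding D_def by simp
qed

context
  fixes A U :: "nat \<Rightarrow> 'h::complex_hilbert_space op set" and p :: "nat filter"
  assumes fd: "\<And>n. fin_dim_C_star (A n)" and asc: "\<And>n. A n \<subseteq> A (Suc n)"
    and grp: "\<And>n. finite_unitary_group (U n) (A n)" and spans: "\<And>n. op_span (U n) = A n"
    and ultra: "free_ultrafilter p"
begin

lemma A_star: "star_subalgebra (A n)"
  using fd by (simp add: fin_dim_C_star_def)

lemma A_BH: "A n \<subseteq> BH"
  using A_star star_BH by blast

lemma A_mono: "m \<le> n \<Longrightarrow> A m \<subseteq> A n"
  by (rule lift_Suc_mono_le[of A]) (use asc in auto)

lemma U_fin: "finite (U n)" and U_id: "id \<in> U n"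
  and U_mult: "V \<in> U n \<Longrightarrow> W \<in> U n \<Longrightarrow> V \<circ> W \<in> U n"
  and U_adj: "V \<in> U n \<Longrightarrow> adj V \<in> U n"
  and U_A: "V \<in> U n \<Longrightarrow> V \<in> A n"
  and U_unit: "V \<in> U n \<Longrightarrow> V \<circ> adj V = id" "V \<in> U n \<Longrightarrow> adj V \<circ> V = id"
  using grp[of n] unfolding finite_unitary_group_def unitaries_def by blast+

lemma U_BH: "V \<in> U n \<Longrightarrow> V \<in> BH"
  using U_A A_BH by blast

lemma U_unit': "V \<in> U n \<Longrightarrow> V (adj V x) = x" "V \<in> U n \<Longrightarrow> adj V (V x) = x"
  using U_unit[of V n] by (simp_all add: fun_eq_iff)

lemma U_card: "card (U n) \<ge> 1"
proof -
  have "U n \<noteq> {}" using U_id by blast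
  then have "card (U n) > 0" using U_fin by (simp add: card_gt_0_iff)
  then show ?thesis by simp
qed

lemma U_iso: "V \<in> U n \<Longrightarrow> hnorm (V x) = hnorm x"
proof -
  assume V: "V \<in> U n"
  have "cinner (V x) (V x) = cinner x x"
    using adj_prop[OF U_BH[OF V], of x "V x"] U_unit'(2)[OF V] by simp
  then show ?thesis by (simp add: hnorm_def)
qed

abbreviation avg where "avg n T \<equiv> unitary_average (U n) T"

lemma avg_add: "T \<in> BH \<Longrightarrow> avg n T (x + y) = avg n T x + avg n T y"
proof -
  assume T: "T \<in> BH"
  have "(\<Sum>V\<in>U n. V (T (adj V (x + y)))) = (\<Sum>V\<in>U n. V (T (adj V x))) + (\<Sum>V\<in>U n. V (T (adj V y)))"
    by (simp add: sum.distrib[symmetric] bh_add[OF T] bh_add[OF U_BH[OF U_adj]] bh_add[OF U_BH])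
  then show ?thesis unfolding unitary_average_def by (simp add: scaleC_add_right)
qed

lemma avg_scale: "T \<in> BH \<Longrightarrow> avg n T (a *\<^sub>C x) = a *\<^sub>C avg n T x"
proof -
  assume T: "T \<in> BH"
  have "(\<Sum>V\<in>U n. V (T (adj V (a *\<^sub>C x)))) = a *\<^sub>C (\<Sum>V\<in>U n. V (T (adj V x)))"
    by (simp add: cvs.scale_sum_right bh_scale[OF T] bh_scale[OF U_BH[OF U_adj]] bh_scale[OF U_BH])
  then show ?thesis unfolding unitary_average_def by (simp add: scaleC_scaleC mult.commute)
qed

lemma avg_bound: "T \<in> BH \<Longrightarrow> hnorm (avg n T x) \<le> opnorm T * hnorm x"
proof -
  assume T: "T \<in> BH"
  define N where "N = card (U n)"
  have N: "real N \<ge> 1" using U_card N_def by simp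
  have "hnorm (\<Sum>V\<in>U n. V (T (adj V x))) \<le> (\<Sum>V\<in>U n. hnorm (V (T (adj V x))))"
    by (rule hnorm_sum)
  also have "\<dots> \<le> (\<Sum>V\<in>U n. opnorm T * hnorm x)"
  proof (rule sum_mono)
    fix V assume V: "V \<in> U n"
    have "hnorm (V (T (adj V x))) = hnorm (T (adj V x))" by (rule U_iso[OF V])
    also have "\<dots> \<le> opnorm T * hnorm (adj V x)" by (rule opnorm_facts(2)[OF T])
    also have "hnorm (adj V x) = hnorm x" by (rule U_iso[OF U_adj[OF V]])
    finally show "hnorm (V (T (adj V x))) \<le> opnorm T * hnorm x" .
  qed
  also have "\<dots> = real N * (opnorm T * hnorm x)" by (simp add: N_def)
  finally have h: "hnorm (\<Sum>V\<in>U n. V (T (adj V x))) \<le> real N * (opnorm T * hnorm x)" .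
  have "hnorm (avg n T x) = hnorm (\<Sum>V\<in>U n. V (T (adj V x))) / real N"
    unfolding unitary_average_def N_def[symmetric] by (simp add: hnorm_scaleC norm_divide)
  also have "\<dots> \<le> opnorm T * hnorm x" using h N by (simp add: divide_le_eq mult.commute)
  finally show ?thesis .
qed

lemma avg_BH: "T \<in> BH \<Longrightarrow> avg n T \<in> BH"
  by (rule BH_I[where K = "opnorm T"]) (simp_all add: avg_add avg_scale avg_bound)

lemma avg_plus: "T1 \<in> BH \<Longrightarrow> T2 \<in> BH \<Longrightarrow> avg n (op_plus T1 T2) x = avg n T1 x + avg n T2 x"
  unfolding unitary_average_def op_plus_def
  by (simp add: bh_add[OF U_BH] sum.distrib scaleC_add_right)

lemma avg_opscale: "T \<in> BH \<Longrightarrow> avg n (op_scale a T) x = a *\<^sub>C avg n T x"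
  unfolding unitary_average_def op_scale_def
  by (simp add: bh_scale[OF U_BH] cvs.scale_sum_right[symmetric] scaleC_scaleC mult.commute)

lemma adj_mult_U: "V \<in> U n \<Longrightarrow> W \<in> U n \<Longrightarrow> adj (W \<circ> V) (W x) = adj V x"
proof -
  assume V: "V \<in> U n" and W: "W \<in> U n"
  have WV: "W \<circ> V \<in> U n" by (rule U_mult[OF W V])
  have "adj (W \<circ> V) (W x) = adj (W \<circ> V) ((W \<circ> V) (adj V x))" by (simp add: U_unit'(1)[OF V])
  also have "\<dots> = adj V x" by (rule U_unit'(2)[OF WV])
  finally show ?thesis .
qed

lemma avg_comm_U: "T \<in> BH \<Longrightarrow> W \<in> U n \<Longrightarrow> W (avg n T x) = avg n T (W x)"
proof -
  assume T: "T \<in> BH" and W: "W \<in> U n"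
  have "(\<Sum>V\<in>U n. V (T (adj V (W x)))) = (\<Sum>V\<in>U n. W (V (T (adj V x))))"
  proof (rule sum.reindex_bij_witness[where i = "\<lambda>V. W \<circ> V" and j = "\<lambda>V. adj W \<circ> V"])
    fix V assume V: "V \<in> U n"
    show "W \<circ> (adj W \<circ> V) = V" using U_unit(1)[OF W] by (simp add: comp_assoc[symmetric])
    show "adj W \<circ> V \<in> U n" by (rule U_mult[OF U_adj[OF W] V])
    show "adj W \<circ> (W \<circ> V) = V" using U_unit(2)[OF W] by (simp add: comp_assoc[symmetric])
    show "W \<circ> V \<in> U n" by (rule U_mult[OF W V])
    have "adj (adj W \<circ> V) (adj W (W x)) = adj V (W x)" by (rule adj_mult_U[OF V U_adj[OF W]])
    then have e: "adj (adj W \<circ> V) x = adj V (W x)" by (simp add: U_unit'(2)[OF W])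
    show "W ((adj W \<circ> V) (T (adj (adj W \<circ> V) x))) = V (T (adj V (W x)))"
      by (simp add: e U_unit'(1)[OF W])
  qed
  then show ?thesis
    unfolding unitary_average_def
    by (simp add: bh_scale[OF U_BH[OF W]] bh_sum[OF U_BH[OF W]])
qed

lemma avg_comm_A: "T \<in> BH \<Longrightarrow> a \<in> A n \<Longrightarrow> a (avg n T x) = avg n T (a x)"
proof -
  assume T: "T \<in> BH" and a: "a \<in> A n"
  then obtain c where c: "a = (\<lambda>x. \<Sum>b\<in>U n. c b *\<^sub>C b x)"
    using spans[of n] unfolding op_span_def by blast
  have "avg n T (a x) = (\<Sum>b\<in>U n. avg n T (c b *\<^sub>C b x))"
    unfolding c by (rule bh_sum[OF avg_BH[OF T]])
  also have "\<dots> = (\<Sum>b\<in>U n. c b *\<^sub>C b (avg n T x))"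
    by (simp add: avg_scale[OF T] avg_comm_U[OF T])
  finally show ?thesis unfolding c by simp
qed

lemma avg_fixed:
  assumes T: "T \<in> BH" and comm: "\<And>a. a \<in> A n \<Longrightarrow> T \<circ> a = a \<circ> T"
  shows "avg n T = T"
proof
  fix x
  have "(\<Sum>V\<in>U n. V (T (adj V x))) = (\<Sum>V\<in>U n. T x)"
  proof (rule sum.cong)
    fix V assume V: "V \<in> U n"
    have "V (T (adj V x)) = T (V (adj V x))" using comm[OF U_A[OF V]] by (simp add: fun_eq_iff)
    then show "V (T (adj V x)) = T x" by (simp add: U_unit'(1)[OF V])
  qed simp
  also have "\<dots> = complex_of_nat (card (U n)) *\<^sub>C T x" by (simp add: cvs.sum_constant_scale)
  finally show "avg n T x = T x"
    unfolding unitary_average_def using U_card[of n]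
    by (simp add: scaleC_scaleC scaleC_one)
qed

lemma avg_in_star:
  assumes S: "star_subalgebra S" and AS: "A n \<subseteq> S" and T: "T \<in> S"
  shows "avg n T \<in> S"
proof -
  have "(\<lambda>x. \<Sum>V\<in>U n. (V \<circ> (T \<circ> adj V)) x) \<in> S"
  proof (rule star_sum[OF S U_fin])
    fix V assume V: "V \<in> U n"
    have "adj V \<in> S" "V \<in> S" using U_A[OF U_adj[OF V]] U_A[OF V] AS by blast+
    moreover have "\<forall>S'\<in>S. \<forall>T'\<in>S. S' \<circ> T' \<in> S" using S unfolding star_subalgebra_def by simp
    ultimately show "V \<circ> (T \<circ> adj V) \<in> S" using T by simp
  qed
  moreover have "\<forall>a. \<forall>T\<in>S. op_scale a T \<in> S" using S unfolding star_subalgebra_def by simp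
  ultimately have "op_scale (1 / of_nat (card (U n))) (\<lambda>x. \<Sum>V\<in>U n. (V \<circ> (T \<circ> adj V)) x) \<in> S"
    by blast
  then show ?thesis unfolding op_scale_def unitary_average_def by simp
qed

lemma avg_in_hull:
  assumes AS: "A n \<subseteq> S"
  shows "avg n T \<in> unitary_conv_hull S T"
proof -
  define k where "k = card (U n)"
  obtain h where h: "bij_betw h {..<k} (U n)"
    using ex_bij_betw_nat_finite[OF U_fin] unfolding k_def atLeast0LessThan by blast
  have k: "k \<ge> 1" using U_card k_def by simp
  have hU: "h i \<in> U n" if "i < k" for i using h that by (auto simp: bij_betw_def)
  have "avg n T = (\<lambda>x. \<Sum>i<k. complex_of_real (1 / real k) *\<^sub>C h i (T (adj (h i) x)))"
  proof
    fix x
    have "(\<Sum>i<k. h i (T (adj (h i) x))) = (\<Sum>V\<in>U n. V (T (adj V x)))"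
      by (rule sum.reindex_bij_betw[OF h])
    moreover have "(\<Sum>i<k. complex_of_real (1 / real k) *\<^sub>C h i (T (adj (h i) x))) =
        complex_of_real (1 / real k) *\<^sub>C (\<Sum>i<k. h i (T (adj (h i) x)))"
      by (simp add: cvs.scale_sum_right)
    ultimately show "avg n T x = (\<Sum>i<k. complex_of_real (1 / real k) *\<^sub>C h i (T (adj (h i) x)))"
      unfolding unitary_average_def k_def[symmetric] by simp
  qed
  moreover have "\<forall>i<k. 0 \<le> 1 / real k \<and> h i \<in> unitaries S"
  proof (intro allI impI conjI)
    fix i assume i: "i < k"
    show "0 \<le> 1 / real k" by simp
    have "h i \<in> S" using U_A[OF hU[OF i]] AS by blast
    then show "h i \<in> unitaries S" unfolding unitaries_def using U_unit[OF hU[OF i]] by simp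
  qed
  moreover have "(\<Sum>i<k. 1 / real k) = 1" using k by simp
  ultimately show ?thesis unfolding unitary_conv_hull_def
    by (intro CollectI exI[of _ k] exI[of _ "\<lambda>i. 1 / real k"] exI[of _ h]) simp
qed


lemma p_nonbot: "p \<noteq> bot"
  using ultra unfolding free_ultrafilter_def by blast

lemma p_ev_ge: "eventually (\<lambda>n. m \<le> n) p"
proof -
  have "\<forall>k\<in>{..<m}. eventually (\<lambda>n. n \<noteq> k) p" using ultra unfolding free_ultrafilter_def by blast
  then have "eventually (\<lambda>n. \<forall>k\<in>{..<m}. n \<noteq> k) p" by (rule eventually_ball_finite[rotated]) simp
  then show ?thesis
  proof (rule eventually_mono)
    fix n assume h: "\<forall>k\<in>{..<m}. n \<noteq> k"
    show "m \<le> n"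
    proof (rule ccontr)
      assume "\<not> m \<le> n"
      then have "n \<in> {..<m}" by simp
      then show False using h by blast
    qed
  qed
qed

lemma avg_cinner_bound: "T \<in> BH \<Longrightarrow> cmod (cinner (avg n T x) y) \<le> opnorm T * hnorm x * hnorm y"
proof -
  assume T: "T \<in> BH"
  have "cmod (cinner (avg n T x) y) \<le> hnorm (avg n T x) * hnorm y" by (rule cauchy_schwarz)
  also have "\<dots> \<le> (opnorm T * hnorm x) * hnorm y" by (rule mult_right_mono) (simp_all add: avg_bound[OF T])
  finally show ?thesis .
qed

lemma lim_bound:
  assumes "(f \<longlongrightarrow> L) p" "\<And>n. cmod (f n) \<le> M"
  shows "cmod L \<le> M"
proof -
  have "((\<lambda>n. cmod (f n)) \<longlongrightarrow> cmod L) p" by (rule tendsto_norm[OF assms(1)])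
  then show ?thesis
    by (rule tendsto_upperbound) (use assms(2) p_nonbot in \<open>simp_all add: always_eventually\<close>)
qed

lemma Phi_exists:
  assumes T: "T \<in> BH"
  shows "\<exists>S\<in>BH. \<forall>x y. ((\<lambda>n. cinner (avg n T x) y) \<longlongrightarrow> cinner (S x) y) p"
proof -
  define B where "B x y = Lim p (\<lambda>n. cinner (avg n T x) y)" for x y
  have conv: "((\<lambda>n. cinner (avg n T x) y) \<longlongrightarrow> B x y) p" for x y
  proof -
    obtain L where L: "((\<lambda>n. cinner (avg n T x) y) \<longlongrightarrow> L) p"
      using ultra_lim[OF ultra, of "\<lambda>n. cinner (avg n T x) y" "opnorm T * hnorm x * hnorm y"]
        avg_cinner_bound[OF T] by blast
    then have "B x y = L" unfolding B_def using p_nonbot by (intro tendsto_Lim) simp_all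
    then show ?thesis using L by simp
  qed
  have uniq: "B x y = c" if "((\<lambda>n. cinner (avg n T x) y) \<longlongrightarrow> c) p" for x y c
    using tendsto_unique[OF p_nonbot conv that] .
  have "\<exists>S\<in>BH. \<forall>x y. B x y = cinner (S x) y"
  proof (rule sesq_rep[where K = "opnorm T"])
    show "B x (y + z) = B x y + B x z" for x y z
      by (rule uniq) (simp add: cinner_add_right tendsto_add[OF conv conv])
    show "B x (a *\<^sub>C y) = a * B x y" for x a y
      by (rule uniq) (simp add: cinner_scaleC_right tendsto_mult_left[OF conv])
    show "B (x + y) z = B x z + B y z" for x y z
      by (rule uniq) (simp add: avg_add[OF T] cinner_add_left tendsto_add[OF conv conv])
    show "B (a *\<^sub>C x) y = cnj a * B x y" for a x y
      by (rule uniq) (simp add: avg_scale[OF T] cinner_scaleC_left tendsto_mult_left[OF conv])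
    show "cmod (B x y) \<le> opnorm T * hnorm x * hnorm y" for x y
      by (rule lim_bound[OF conv avg_cinner_bound[OF T]])
  qed
  then show ?thesis using conv by metis
qed

abbreviation Phi where "Phi \<equiv> Phi_tp U p"

lemma Phi_spec:
  assumes T: "T \<in> BH"
  shows "Phi T \<in> BH \<and> (\<forall>x y. ((\<lambda>n. cinner (avg n T x) y) \<longlongrightarrow> cinner (Phi T x) y) p)"
proof -
  obtain S where S: "S \<in> BH" "\<forall>x y. ((\<lambda>n. cinner (avg n T x) y) \<longlongrightarrow> cinner (S x) y) p"
    using Phi_exists[OF T] by blast
  have "\<exists>!S. S \<in> BH \<and> (\<forall>x y. ((\<lambda>n. cinner (avg n T x) y) \<longlongrightarrow> cinner (S x) y) p)"
  proof (rule ex1I[of _ S])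
    fix S' assume S': "S' \<in> BH \<and> (\<forall>x y. ((\<lambda>n. cinner (avg n T x) y) \<longlongrightarrow> cinner (S' x) y) p)"
    show "S' = S"
    proof
      fix x show "S' x = S x"
        by (rule cinner_eq_allI, rule tendsto_unique[OF p_nonbot]) (use S S' in blast)+
    qed
  qed (use S in blast)
  from theI'[OF this] show ?thesis unfolding Phi_tp_def .
qed

lemma Phi_BH: "T \<in> BH \<Longrightarrow> Phi T \<in> BH"
  using Phi_spec by blast

lemma Phi_lim: "T \<in> BH \<Longrightarrow> ((\<lambda>n. cinner (avg n T x) y) \<longlongrightarrow> cinner (Phi T x) y) p"
  using Phi_spec by blast

lemma Phi_eqI:
  assumes T: "T \<in> BH" and lim: "\<And>x y. ((\<lambda>n. cinner (avg n T x) y) \<longlongrightarrow> cinner (S x) y) p"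
  shows "Phi T = S"
proof
  fix x show "Phi T x = S x"
    by (rule cinner_eq_allI, rule tendsto_unique[OF p_nonbot Phi_lim[OF T] lim])
qed

lemma Phi_bound: "T \<in> BH \<Longrightarrow> hnorm (Phi T x) \<le> opnorm T * hnorm x"
proof -
  assume T: "T \<in> BH"
  define z where "z = Phi T x"
  have "cmod (cinner z z) \<le> opnorm T * hnorm x * hnorm z"
    unfolding z_def by (rule lim_bound[OF Phi_lim[OF T] avg_cinner_bound[OF T]])
  moreover have "cmod (cinner z z) = (hnorm z)\<^sup>2"
    by (simp add: cinner_self_hnorm norm_power)
  moreover have "(hnorm z)\<^sup>2 = hnorm z * hnorm z" by (simp add: power2_eq_square)
  ultimately have h: "hnorm z * hnorm z \<le> (opnorm T * hnorm x) * hnorm z" by simp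
  show ?thesis
  proof (cases "z = 0")
    case True then show ?thesis using opnorm_facts(1)[OF T] z_def by simp
  next
    case False then show ?thesis using h hnorm_pos[OF False] z_def by simp
  qed
qed

lemma Phi_opnorm: "T \<in> BH \<Longrightarrow> opnorm (Phi T) \<le> opnorm T"
  by (rule opnorm_le) (simp_all add: opnorm_facts(1) Phi_bound)

lemma Phi_plus: "T1 \<in> BH \<Longrightarrow> T2 \<in> BH \<Longrightarrow> Phi (op_plus T1 T2) = op_plus (Phi T1) (Phi T2)"
proof -
  assume T1: "T1 \<in> BH" and T2: "T2 \<in> BH"
  show ?thesis
  proof (rule Phi_eqI[OF op_plus_BH[OF T1 T2]])
    fix x y
    have e1: "(\<lambda>n. cinner (avg n (op_plus T1 T2) x) y) = (\<lambda>n. cinner (avg n T1 x) y + cinner (avg n T2 x) y)"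
      by (simp only: avg_plus[OF T1 T2] cinner_add_left)
    have e2: "cinner (op_plus (Phi T1) (Phi T2) x) y = cinner (Phi T1 x) y + cinner (Phi T2 x) y"
      by (simp add: op_plus_def cinner_add_left)
    show "((\<lambda>n. cinner (avg n (op_plus T1 T2) x) y) \<longlongrightarrow> cinner (op_plus (Phi T1) (Phi T2) x) y) p"
      unfolding e1 e2 by (rule tendsto_add[OF Phi_lim[OF T1] Phi_lim[OF T2]])
  qed
qed

lemma Phi_scale: "T \<in> BH \<Longrightarrow> Phi (op_scale a T) = op_scale a (Phi T)"
proof -
  assume T: "T \<in> BH"
  show ?thesis
  proof (rule Phi_eqI[OF op_scale_BH[OF T]])
    fix x y
    have e1: "(\<lambda>n. cinner (avg n (op_scale a T) x) y) = (\<lambda>n. cnj a * cinner (avg n T x) y)"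
      by (simp only: avg_opscale[OF T] cinner_scaleC_left)
    have e2: "cinner (op_scale a (Phi T) x) y = cnj a * cinner (Phi T x) y"
      by (simp add: op_scale_def cinner_scaleC_left)
    show "((\<lambda>n. cinner (avg n (op_scale a T) x) y) \<longlongrightarrow> cinner (op_scale a (Phi T) x) y) p"
      unfolding e1 e2 by (rule tendsto_mult_left[OF Phi_lim[OF T]])
  qed
qed

lemma Phi_comm_A:
  assumes T: "T \<in> BH" and a: "a \<in> A m"
  shows "Phi T \<circ> a = a \<circ> Phi T"
proof (rule ext, rule cinner_eq_allI)
  fix x y
  have aB: "a \<in> BH" using a A_BH by blast
  have ev: "eventually (\<lambda>n. cinner (avg n T x) (adj a y) = cinner (avg n T (a x)) y) p"
  proof (rule eventually_mono[OF p_ev_ge[of m]])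
    fix n assume "m \<le> n"
    then have an: "a \<in> A n" using A_mono a by blast
    have "cinner (avg n T (a x)) y = cinner (a (avg n T x)) y" by (simp add: avg_comm_A[OF T an])
    also have "\<dots> = cinner (avg n T x) (adj a y)" by (rule adj_prop[OF aB])
    finally show "cinner (avg n T x) (adj a y) = cinner (avg n T (a x)) y" by simp
  qed
  have "((\<lambda>n. cinner (avg n T x) (adj a y)) \<longlongrightarrow> cinner (Phi T x) (adj a y)) p" by (rule Phi_lim[OF T])
  then have "((\<lambda>n. cinner (avg n T (a x)) y) \<longlongrightarrow> cinner (Phi T x) (adj a y)) p"
    by (rule iffD1[OF tendsto_cong[OF ev]])
  then have "cinner (Phi T (a x)) y = cinner (Phi T x) (adj a y)"
    by (rule tendsto_unique[OF p_nonbot Phi_lim[OF T]])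
  also have "\<dots> = cinner (a (Phi T x)) y" by (rule adj_prop[OF aB, symmetric])
  finally show "cinner ((Phi T \<circ> a) x) y = cinner ((a \<circ> Phi T) x) y" by simp
qed

lemma A_sub_R: "A n \<subseteq> ultraweak_closure (\<Union>n. A n)"
proof
  fix X assume X: "X \<in> A n"
  then have "X \<in> BH" using A_BH by blast
  moreover have "X \<in> (\<Union>n. A n)" using X by blast
  ultimately show "X \<in> ultraweak_closure (\<Union>n. A n)"
    unfolding ultraweak_closure_def
    by (intro CollectI conjI allI impI bexI[of _ X]) simp_all
qed

lemma Phi_commutant: "T \<in> BH \<Longrightarrow> Phi T \<in> commutant (ultraweak_closure (\<Union>n. A n))"
proof -
  assume T: "T \<in> BH"
  have "Phi T \<circ> X = X \<circ> Phi T" if X: "X \<in> ultraweak_closure (\<Union>n. A n)" for X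
  proof (rule comm_closure[OF Phi_BH[OF T] _ X])
    fix a assume "a \<in> (\<Union>n. A n)"
    then obtain m where "a \<in> A m" by blast
    then show "Phi T \<circ> a = a \<circ> Phi T" by (rule Phi_comm_A[OF T])
  qed
  then show ?thesis unfolding commutant_def using Phi_BH[OF T] by blast
qed

lemma Phi_fixed:
  assumes T: "T \<in> commutant (ultraweak_closure (\<Union>n. A n))"
  shows "Phi T = T"
proof -
  have TB: "T \<in> BH" using T unfolding commutant_def by blast
  have "avg n T = T" for n
  proof (rule avg_fixed[OF TB])
    fix a assume "a \<in> A n"
    then have "a \<in> ultraweak_closure (\<Union>n. A n)" using A_sub_R by blast
    then show "T \<circ> a = a \<circ> T" using T unfolding commutant_def by blast
  qed
  then show ?thesis by (intro Phi_eqI[OF TB]) simp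
qed

lemma Phi_wot:
  assumes T: "T \<in> BH" and Y: "\<And>n. avg n T \<in> Y"
  shows "Phi T \<in> wot_closure Y"
  unfolding wot_closure_def
proof (intro CollectI conjI allI impI)
  show "Phi T \<in> BH" by (rule Phi_BH[OF T])
  fix F :: "('h \<times> 'h) set" and e :: real assume F: "finite F" and e: "e > 0"
  have "\<forall>z\<in>F. eventually (\<lambda>n. cmod (cinner (Phi T (fst z)) (snd z) - cinner (avg n T (fst z)) (snd z)) < e) p"
  proof
    fix z
    have "eventually (\<lambda>n. dist (cinner (avg n T (fst z)) (snd z)) (cinner (Phi T (fst z)) (snd z)) < e) p"
      using Phi_lim[OF T, of "fst z" "snd z"] e unfolding tendsto_iff by blast
    then show "eventually (\<lambda>n. cmod (cinner (Phi T (fst z)) (snd z) - cinner (avg n T (fst z)) (snd z)) < e) p"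
      by (simp add: dist_norm norm_minus_commute)
  qed
  then have "eventually (\<lambda>n. \<forall>z\<in>F. cmod (cinner (Phi T (fst z)) (snd z) - cinner (avg n T (fst z)) (snd z)) < e) p"
    by (rule eventually_ball_finite[OF F])
  then obtain n where n: "\<forall>z\<in>F. cmod (cinner (Phi T (fst z)) (snd z) - cinner (avg n T (fst z)) (snd z)) < e"
    using eventually_happens p_nonbot by blast
  show "\<exists>a\<in>Y. \<forall>(x, y)\<in>F. cmod (cinner (Phi T x) y - cinner (a x) y) < e"
    using n Y[of n] by (intro bexI[of _ "avg n T"]) auto
qed

lemma Phi_id: "Phi id = id"
  by (rule Phi_fixed) (simp add: commutant_def id_BH)

lemma Phi_sup:
  assumes nontriv: "\<exists>x::'h. x \<noteq> 0" and SB: "S \<subseteq> BH" and idS: "id \<in> S"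
  shows "Sup {opnorm (Phi T) | T. T \<in> S \<and> opnorm T \<le> 1} = 1"
proof (rule cSup_eq_maximum)
  show "1 \<in> {opnorm (Phi T) | T. T \<in> S \<and> opnorm T \<le> 1}"
    using idS opnorm_id[OF nontriv] Phi_id by (auto intro!: exI[of _ id])
  fix r assume "r \<in> {opnorm (Phi T) | T. T \<in> S \<and> opnorm T \<le> 1}"
  then obtain T where "r = opnorm (Phi T)" "T \<in> S" "opnorm T \<le> 1" by blast
  then show "r \<le> 1" using Phi_opnorm SB by force
qed

lemma Phi_cond_exp:
  assumes nontriv: "\<exists>x::'h. x \<noteq> 0" and SB: "S \<subseteq> BH" and idS: "id \<in> S"
    and img: "Phi ` S = M"
  shows "cond_exp Phi S M"
  unfolding cond_exp_def
proof (intro conjI ballI allI)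
  show "Phi ` S = M" by (rule img)
  fix T assume "T \<in> S"
  then have T: "T \<in> BH" using SB by blast
  show "Phi (Phi T) = Phi T" by (rule Phi_fixed[OF Phi_commutant[OF T]])
next
  fix T1 T2 assume "T1 \<in> S" "T2 \<in> S"
  then show "Phi (op_plus T1 T2) = op_plus (Phi T1) (Phi T2)" using SB Phi_plus by blast
next
  fix a T assume "T \<in> S"
  then show "Phi (op_scale a T) = op_scale a (Phi T)" using SB Phi_scale by blast
next
  show "Sup {opnorm (Phi T) | T. T \<in> S \<and> opnorm T \<le> 1} = 1" by (rule Phi_sup[OF nontriv SB idS])
qed

end


theorem propositionB:
  fixes R :: "'h::complex_hilbert_space op set"
    and A :: "nat \<Rightarrow> 'h op set"
    and U :: "nat \<Rightarrow> 'h op set"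
    and p :: "nat filter"
  assumes nontriv: "\<exists>x::'h. x \<noteq> 0"
    and fd: "\<And>n. fin_dim_C_star (A n)"
    and asc: "\<And>n. A n \<subseteq> A (Suc n)"
    and vN: "von_neumann_algebra R"
    and R_def: "R = ultraweak_closure (\<Union>n. A n)"
    and grp: "\<And>n. finite_unitary_group (U n) (A n)"
    and spans: "\<And>n. op_span (U n) = A n"
    and ultra: "free_ultrafilter p"
  shows "cond_exp (Phi_tp U p) BH (commutant R)
    \<and> (\<forall>S. von_neumann_algebra S \<and> R \<subseteq> S \<longrightarrow>
           proper_cond_exp (Phi_tp U p) S (S \<inter> commutant R))"
proof -
  note Phi_commutant' = Phi_commutant[where A = A and U = U and p = p, OF fd asc grp spans ultra, folded R_def]
  note Phi_fixed' = Phi_fixed[where A = A and U = U and p = p, OF fd asc grp spans ultra, folded R_def]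
  note A_sub_R' = A_sub_R[where A = A and U = U and p = p, OF fd asc grp spans ultra, folded R_def]
  have img1: "Phi_tp U p ` BH = commutant R"
  proof
    show "Phi_tp U p ` BH \<subseteq> commutant R" using Phi_commutant' by blast
    show "commutant R \<subseteq> Phi_tp U p ` BH"
    proof
      fix T assume T: "T \<in> commutant R"
      then have "T \<in> BH" unfolding commutant_def by blast
      moreover have "Phi_tp U p T = T" by (rule Phi_fixed'[OF T])
      ultimately show "T \<in> Phi_tp U p ` BH" by (metis image_eqI)
    qed
  qed
  have part1: "cond_exp (Phi_tp U p) BH (commutant R)"
    by (rule Phi_cond_exp[where A = A and U = U and p = p, OF fd asc grp spans ultra nontriv subset_refl id_BH img1])
  have part2: "proper_cond_exp (Phi_tp U p) S (S \<inter> commutant R)"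
    if S: "von_neumann_algebra S" "R \<subseteq> S" for S
  proof -
    have Sstar: "star_subalgebra S" using S unfolding von_neumann_algebra_def by blast
    have Swot: "wot_closure S \<subseteq> S" using S unfolding von_neumann_algebra_def by blast
    have SB: "S \<subseteq> BH" by (rule star_BH[OF Sstar])
    have idS: "id \<in> S" using Sstar unfolding star_subalgebra_def by blast
    have AS: "A n \<subseteq> S" for n using A_sub_R' S(2) by blast
    have inS: "Phi_tp U p T \<in> S" if T: "T \<in> S" for T
    proof -
      have "Phi_tp U p T \<in> wot_closure S"
        by (rule Phi_wot[where A = A and U = U and p = p, OF fd asc grp spans ultra]) (use T SB avg_in_star[where A = A and U = U and p = p, OF fd asc grp spans ultra Sstar AS] in auto)
      then show ?thesis using Swot by blast
    qed
    have img2: "Phi_tp U p ` S = S \<inter> commutant R"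
    proof
      show "Phi_tp U p ` S \<subseteq> S \<inter> commutant R" using inS Phi_commutant' SB by blast
      show "S \<inter> commutant R \<subseteq> Phi_tp U p ` S"
      proof
        fix T assume T: "T \<in> S \<inter> commutant R"
        then have "Phi_tp U p T = T" using Phi_fixed' by blast
        then show "T \<in> Phi_tp U p ` S" using T by (metis IntD1 image_eqI)
      qed
    qed
    have ce: "cond_exp (Phi_tp U p) S (S \<inter> commutant R)"
      by (rule Phi_cond_exp[where A = A and U = U and p = p, OF fd asc grp spans ultra nontriv SB idS img2])
    have "Phi_tp U p T \<in> wot_closure (unitary_conv_hull S T)" if T: "T \<in> S" for T
      by (rule Phi_wot[where A = A and U = U and p = p, OF fd asc grp spans ultra])
        (use T SB avg_in_hull[where A = A and U = U and p = p, OF fd asc grp spans ultra AS] in auto)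
    then show ?thesis unfolding proper_cond_exp_def using ce by blast
  qed
  show ?thesis using part1 part2 by blast
qed

end
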